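(* Let $m\ge 2$, $\gamma>0$ and $u>0$, and let $h\in\{N,S\}$. Let $\kappa\in\mathbb C$ with $k=|\kappa|>0$. Then there is $E_0=E_0(\gamma,u,k)>0$ such that the matrix $\hat H^h(\kappa)$ has no eigenvalue in the interval $(-E_0,E_0)$. Moreover, all eigenvalues of $\hat H^h(\kappa)$ are simple.
   Context: Let $\sigma_1,\sigma_2$ be the standard Pauli matrices and $A=\begin{pmatrix}0&0\\1&0\end{pmatrix}$. For a real number $v$ and $\kappa=k_x+ik_y\in\mathbb C$, let $\hat H(\kappa;v)$ be the $2m\times 2m$ Hermitian matrix written in $m\times m$ blocks of size $2\times2$ whose $j$-th diagonal block is $u_jI_2+\begin{pmatrix}0&\bar\kappa\\ \kappa&0\end{pmatrix}$ with $u_j=\frac{v}{m-1}\big(j-\frac{m+1}{2}\big)$, whose $(j,j+1)$ block is $\gamma A$ and whose $(j+1,j)$ block is $\gamma A^*$ for $1\le j\le m-1$, all other blocks being zero. Define $\hat H^N(\kappa)=\hat H(\kappa;u)$ and $\hat H^S(\kappa)=\hat H(\kappa;-u)$. *)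

theory Defs
  imports "Jordan_Normal_Form.Char_Poly" "HOL-Computational_Algebra.Polynomial"
begin

text \<open>Layer potentials u_j = v/(m-1) (j - (m+1)/2), with j = b+1 for a 0-based block index b.\<close>
definition layer_pot :: "nat \<Rightarrow> real \<Rightarrow> nat \<Rightarrow> real" where
  "layer_pot m v b = v / (real m - 1) * (real (b + 1) - (real m + 1) / 2)"

text \<open>The 2m x 2m matrix H(kappa; v), 0-based indices; row i lies in block i div 2,
  component i mod 2. Diagonal blocks u_j I + [[0, conj kappa],[kappa, 0]];
  (j,j+1) blocks gamma*A with A = [[0,0],[1,0]]; (j+1,j) blocks gamma*A^*.\<close>
definition Hhat :: "nat \<Rightarrow> real \<Rightarrow> complex \<Rightarrow> real \<Rightarrow> complex mat" where
  "Hhat m \<gamma> \<kappa> v = mat (2*m) (2*m) (\<lambda>(i, j).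
     let b = i div 2; a = i mod 2; b' = j div 2; a' = j mod 2 in
     if b = b' then
       (if a = a' then complex_of_real (layer_pot m v b)
        else if a = 0 then cnj \<kappa> else \<kappa>)
     else if b' = b + 1 then (if a = 1 \<and> a' = 0 then complex_of_real \<gamma> else 0)
     else if b = b' + 1 then (if a = 0 \<and> a' = 1 then complex_of_real \<gamma> else 0)
     else 0)"

definition HN :: "nat \<Rightarrow> real \<Rightarrow> real \<Rightarrow> complex \<Rightarrow> complex mat" where
  "HN m \<gamma> u \<kappa> = Hhat m \<gamma> \<kappa> u"

definition HS :: "nat \<Rightarrow> real \<Rightarrow> real \<Rightarrow> complex \<Rightarrow> complex mat" where
  "HS m \<gamma> u \<kappa> = Hhat m \<gamma> \<kappa> (- u)"

end

theory Submission imports Defs begin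

definition tri :: "nat \<Rightarrow> (nat \<Rightarrow> 'a::comm_ring_1) \<Rightarrow> (nat \<Rightarrow> 'a) \<Rightarrow> (nat \<Rightarrow> 'a) \<Rightarrow> 'a mat" where
  "tri n d c b = mat n n (\<lambda>(i,j). if i = j then d i else if j = Suc i then c i else if i = Suc j then b j else 0)"

lemma tri_carrier[simp]: "tri n d c b \<in> carrier_mat n n"
  by (simp add: tri_def)

lemma tri_delete: "mat_delete (tri (Suc n) d c b) n n = tri n d c b"
  by (rule eq_matI) (auto simp: tri_def mat_delete_def)

lemma det_tri_Suc_Suc:
  "det (tri (Suc (Suc n)) d c b) = d (Suc n) * det (tri (Suc n) d c b) - b n * c n * det (tri n d c b)"
proof -
  let ?A = "tri (Suc (Suc n)) d c b"
  let ?B = "mat_delete ?A (Suc n) n"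
  have B: "?B \<in> carrier_mat (Suc n) (Suc n)" using mat_delete_carrier[OF tri_carrier[of "Suc (Suc n)" d c b]] by simp
  have "det ?B = (\<Sum>i<Suc n. ?B $$ (i,n) * cofactor ?B i n)"
    by (rule laplace_expansion_column[OF B]) simp
  also have "\<dots> = ?B $$ (n,n) * cofactor ?B n n"
    by (subst sum.lessThan_Suc) (auto intro!: sum.neutral simp: mat_delete_def tri_def)
  also have "?B $$ (n,n) = c n" by (simp add: mat_delete_def tri_def)
  also have "mat_delete ?B n n = tri n d c b"
    by (rule eq_matI) (auto simp: tri_def mat_delete_def)
  hence "cofactor ?B n n = det (tri n d c b)" by (simp add: cofactor_def)
  finally have dB: "det ?B = c n * det (tri n d c b)" by simp
  have "det ?A = (\<Sum>j<Suc (Suc n). ?A $$ (Suc n,j) * cofactor ?A (Suc n) j)"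
    by (rule laplace_expansion_row) auto
  also have "\<dots> = ?A $$ (Suc n, n) * cofactor ?A (Suc n) n + ?A $$ (Suc n, Suc n) * cofactor ?A (Suc n) (Suc n)"
    by (simp add: sum.lessThan_Suc, rule sum.neutral) (auto simp: tri_def)
  also have "\<dots> = d (Suc n) * det (tri (Suc n) d c b) - b n * c n * det (tri n d c b)"
    by (simp add: cofactor_def tri_delete dB) (simp add: tri_def)
  finally show ?thesis .
qed

fun cp :: "(nat \<Rightarrow> real) \<Rightarrow> (nat \<Rightarrow> real) \<Rightarrow> nat \<Rightarrow> complex poly" where
  "cp d w 0 = 1"
| "cp d w (Suc 0) = [:- of_real (d 0), 1:]"
| "cp d w (Suc (Suc n)) = [:- of_real (d (Suc n)), 1:] * cp d w (Suc n) - Polynomial.smult (of_real (w n)) (cp d w n)"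

definition hf :: "nat \<Rightarrow> real \<Rightarrow> complex \<Rightarrow> real \<Rightarrow> nat \<times> nat \<Rightarrow> complex" where
  "hf m \<gamma> \<kappa> v = (\<lambda>(i, j).
     let b = i div 2; a = i mod 2; b' = j div 2; a' = j mod 2 in
     if b = b' then
       (if a = a' then complex_of_real (layer_pot m v b)
        else if a = 0 then cnj \<kappa> else \<kappa>)
     else if b' = b + 1 then (if a = 1 \<and> a' = 0 then complex_of_real \<gamma> else 0)
     else if b = b' + 1 then (if a = 0 \<and> a' = 1 then complex_of_real \<gamma> else 0)
     else 0)"

lemma Hhat_hf: "Hhat m \<gamma> \<kappa> v = mat (2*m) (2*m) (hf m \<gamma> \<kappa> v)"
  unfolding Hhat_def hf_def ..

lemma hf_far: "j \<noteq> i \<Longrightarrow> j \<noteq> Suc i \<Longrightarrow> i \<noteq> Suc j \<Longrightarrow> hf m \<gamma> \<kappa> v (i,j) = 0"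
  unfolding hf_def Let_def by auto presburger+

lemma hf_diag: "hf m \<gamma> \<kappa> v (i,i) = of_real (layer_pot m v (i div 2))"
  unfolding hf_def by simp

lemma hf_prod: "hf m \<gamma> \<kappa> v (Suc i, i) * hf m \<gamma> \<kappa> v (i, Suc i) = of_real (if even i then (cmod \<kappa>)^2 else \<gamma>^2)"
proof (cases "even i")
  case True
  then obtain q where q: "i = 2*q" by blast
  have "hf m \<gamma> \<kappa> v (Suc i, i) * hf m \<gamma> \<kappa> v (i, Suc i) = \<kappa> * cnj \<kappa>"
    unfolding hf_def q by simp
  then show ?thesis using True by (metis complex_norm_square)
next
  case False
  then obtain q where q: "i = 2*q+1" by (metis oddE)
  have "hf m \<gamma> \<kappa> v (Suc i, i) * hf m \<gamma> \<kappa> v (i, Suc i) = of_real \<gamma> * of_real \<gamma>"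
    unfolding hf_def q by simp
  then show ?thesis using False by (simp add: power2_eq_square)
qed

lemma char_poly_matrix_tri: "char_poly_matrix (Hhat m \<gamma> \<kappa> v) = tri (2*m)
   (\<lambda>i. [:- hf m \<gamma> \<kappa> v (i,i), 1:]) (\<lambda>i. [:- hf m \<gamma> \<kappa> v (i,Suc i):]) (\<lambda>i. [:- hf m \<gamma> \<kappa> v (Suc i,i):])"
  by (rule eq_matI) (auto simp: char_poly_matrix_def Hhat_hf tri_def hf_far)

lemma det_tri_rec:
  assumes D: "D = (\<lambda>i. [:-of_real (d i),1:])" and BC: "\<And>i. B i * C i = [:of_real (w i):]"
  shows "det (tri n D C B) = cp d w n"
proof (induction n rule: induct_nat_012)
  case 0
  then show ?case by (simp add: tri_def det_def)
next
  case 1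
  have "det (tri 1 D C B) = (\<Sum>j<1. tri 1 D C B $$ (0,j) * cofactor (tri 1 D C B) 0 j)"
    by (rule laplace_expansion_row) auto
  also have "\<dots> = D 0 * det (mat_delete (tri 1 D C B) 0 0)" by (simp add: cofactor_def tri_def)
  also have "det (mat_delete (tri 1 D C B) 0 0) = 1" by (simp add: det_def mat_delete_def tri_def)
  finally show ?case by (simp add: D)
next
  case (ge2 n)
  have "det (tri (Suc (Suc n)) D C B) = D (Suc n) * cp d w (Suc n) - B n * C n * cp d w n"
    unfolding det_tri_Suc_Suc ge2.IH ..
  then show ?case by (simp add: D BC)
qed

lemma det_tri_cp: "det (tri n
   (\<lambda>i. [:- hf m \<gamma> \<kappa> v (i,i), 1:]) (\<lambda>i. [:- hf m \<gamma> \<kappa> v (i,Suc i):]) (\<lambda>i. [:- hf m \<gamma> \<kappa> v (Suc i,i):]))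
  = cp (\<lambda>i. layer_pot m v (i div 2)) (\<lambda>i. if even i then (cmod \<kappa>)^2 else \<gamma>^2) n"
proof (rule det_tri_rec)
  fix i
  show "[:- hf m \<gamma> \<kappa> v (Suc i, i):] * [:- hf m \<gamma> \<kappa> v (i, Suc i):] = [:of_real (if even i then (cmod \<kappa>)^2 else \<gamma>^2):]"
    using hf_prod[of m \<gamma> \<kappa> v i] by (simp del: of_real_power add: mult.commute)
qed (simp add: hf_diag fun_eq_iff)

lemma char_poly_Hhat: "char_poly (Hhat m \<gamma> \<kappa> v) =
   cp (\<lambda>i. layer_pot m v (i div 2)) (\<lambda>i. if even i then (cmod \<kappa>)^2 else \<gamma>^2) (2*m)"
  unfolding char_poly_def char_poly_matrix_tri det_tri_cp ..

lemma poly_cp_SS: "poly (cp d w (Suc (Suc n))) x = (x - of_real (d (Suc n))) * poly (cp d w (Suc n)) x - of_real (w n) * poly (cp d w n) x"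
  by (simp add: algebra_simps)

lemma poly_pderiv_cp_SS: "poly (pderiv (cp d w (Suc (Suc n)))) x = poly (cp d w (Suc n)) x
   + (x - of_real (d (Suc n))) * poly (pderiv (cp d w (Suc n))) x - of_real (w n) * poly (pderiv (cp d w n)) x"
  by (simp add: pderiv_mult pderiv_diff pderiv_add pderiv_smult pderiv_pCons algebra_simps)

lemma cp_Im_aux:
  assumes w: "\<And>i. w i > 0" and x: "Im x \<noteq> 0"
  shows "Im (poly (cp d w (Suc n)) x * cnj (poly (cp d w n) x)) * Im x > 0"
proof (induction n)
  case 0
  show ?case using x by (simp, metis mult_neg_neg mult_pos_pos linorder_neqE_linordered_idom)
next
  case (Suc i)
  define a where "a = poly (cp d w (Suc i)) x"
  define b where "b = poly (cp d w i) x"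
  have eq: "Im (((x - of_real (d (Suc i))) * a - of_real (w i) * b) * cnj a) * Im x
     = (Im x)^2 * ((Re a)^2 + (Im a)^2) + w i * (Im (a * cnj b) * Im x)"
    by (simp add: algebra_simps power2_eq_square)
  have "(Im x)^2 * ((Re a)^2 + (Im a)^2) \<ge> 0" by simp
  moreover have "w i * (Im (a * cnj b) * Im x) > 0" using Suc w[of i] unfolding a_def b_def by simp
  ultimately show ?case unfolding poly_cp_SS a_def[symmetric] b_def[symmetric] eq by linarith
qed

lemma cp_root_real:
  assumes w: "\<And>i. w i > 0" and r: "poly (cp d w (Suc i)) x = 0"
  shows "Im x = 0"
  using cp_Im_aux[where w=w and x=x and d=d and n=i, OF w] r by (cases "Im x = 0") auto

lemma cp_Im_real:
  assumes x: "Im x = 0"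
  shows "Im (poly (cp d w n) x) = 0 \<and> Im (poly (pderiv (cp d w n)) x) = 0"
proof (induction n rule: induct_nat_012)
  case 0
  then show ?case by simp
next
  case 1
  then show ?case using x by (simp add: pderiv_pCons)
next
  case (ge2 n)
  then show ?case unfolding poly_cp_SS poly_pderiv_cp_SS using x by simp
qed

lemma cp_W:
  assumes w: "\<And>i. w i > 0" and x: "Im x = 0"
  shows "Re (poly (pderiv (cp d w (Suc n))) x * poly (cp d w n) x - poly (cp d w (Suc n)) x * poly (pderiv (cp d w n)) x) > 0"
proof (induction n)
  case 0
  then show ?case by (simp add: pderiv_pCons)
next
  case (Suc i)
  define a where "a = poly (cp d w (Suc i)) x"
  define b where "b = poly (cp d w i) x"
  define a' where "a' = poly (pderiv (cp d w (Suc i))) x"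
  define b' where "b' = poly (pderiv (cp d w i)) x"
  have ia: "Im a = 0" unfolding a_def using cp_Im_real[OF x] by blast
  have eq: "(a + (x - of_real (d (Suc i))) * a' - of_real (w i) * b') * a - ((x - of_real (d (Suc i))) * a - of_real (w i) * b) * a'
     = a * a + of_real (w i) * (a' * b - a * b')"
    by (simp add: algebra_simps)
  have "Re (a * a) \<ge> 0" using ia by simp
  moreover have "Re (of_real (w i) * (a' * b - a * b')) > 0" using Suc w[of i] unfolding a_def b_def a'_def b'_def by simp
  ultimately show ?case unfolding poly_cp_SS poly_pderiv_cp_SS a_def[symmetric] b_def[symmetric]
      a'_def[symmetric] b'_def[symmetric] eq by simp
qed

lemma cp_simple:
  assumes w: "\<And>i. w i > 0" and r: "poly (cp d w (Suc i)) x = 0"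
  shows "order x (cp d w (Suc i)) = 1"
proof -
  have x: "Im x = 0" by (rule cp_root_real[OF w r])
  have W: "Re (poly (pderiv (cp d w (Suc i))) x * poly (cp d w i) x - poly (cp d w (Suc i)) x * poly (pderiv (cp d w i)) x) > 0"
    by (rule cp_W[OF w x])
  have nz: "cp d w (Suc i) \<noteq> 0"
  proof
    assume "cp d w (Suc i) = 0"
    then show False using W by simp
  qed
  have "poly (pderiv (cp d w (Suc i))) x \<noteq> 0"
  proof
    assume "poly (pderiv (cp d w (Suc i))) x = 0"
    then show False using W r by simp
  qed
  then have "order x (pderiv (cp d w (Suc i))) = 0" by (rule order_0I)
  then show ?thesis using order_pderiv[OF nz r] by simp
qed

lemma cp_nonzero:
  assumes w: "\<And>i. w i > 0"
  shows "cp d w (Suc i) \<noteq> 0"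
proof
  assume "cp d w (Suc i) = 0"
  then show False using cp_W[where w=w and x=0 and d=d and n=i, OF w] by simp
qed

fun cz :: "(nat \<Rightarrow> real) \<Rightarrow> (nat \<Rightarrow> real) \<Rightarrow> nat \<Rightarrow> real" where
  "cz d w 0 = 1"
| "cz d w (Suc 0) = - d 0"
| "cz d w (Suc (Suc n)) = - d (Suc n) * cz d w (Suc n) - w n * cz d w n"

lemma poly_cp_0: "poly (cp d w n) 0 = of_real (cz d w n)"
  by (induction d w n rule: cp.induct) (simp, simp, simp only: poly_cp_SS cz.simps, simp)

locale xfer_loc =
  fixes L :: "nat \<Rightarrow> real" and k \<gamma> :: real and m :: nat
  assumes k: "k > 0" and g: "\<gamma> > 0"
  and sym: "\<And>j. j < m \<Longrightarrow> L (m - 1 - j) = - L j"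
begin

definition "dd i = L (i div 2)"
definition "ww i = (if even i then k^2 else \<gamma>^2)"
definition "e j = cz dd ww (2*j)"
definition "F j = \<gamma> * (if j = 0 then 0 else cz dd ww (2*j - 1))"

lemma cz_odd: "cz dd ww (Suc (2*j)) = - L j * e j - \<gamma> * F j"
proof (cases j)
  case 0
  then show ?thesis by (simp add: e_def F_def dd_def)
next
  case (Suc q)
  have "Suc (2*j) = Suc (Suc (Suc (2*q)))" "2*j = Suc (Suc (2*q))" using Suc by simp_all
  then show ?thesis unfolding e_def F_def using Suc
    by (simp add: dd_def ww_def power2_eq_square del: cz.simps(3)) (simp add: dd_def ww_def power2_eq_square)
qed

lemma step_e: "e (Suc j) = (L j ^ 2 - k^2) * e j + L j * \<gamma> * F j"
proof -
  have "e (Suc j) = cz dd ww (Suc (Suc (2*j)))" unfolding e_def by simp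
  also have "\<dots> = - L j * cz dd ww (Suc (2*j)) - k^2 * e j" by (simp only: cz.simps(3)) (simp add: dd_def ww_def e_def)
  finally show ?thesis unfolding cz_odd by (simp add: algebra_simps power2_eq_square)
qed

lemma step_F: "F (Suc j) = - L j * \<gamma> * e j - \<gamma>^2 * F j"
proof -
  have "F (Suc j) = \<gamma> * cz dd ww (Suc (2*j))" by (simp add: F_def)
  then show ?thesis unfolding cz_odd by (simp add: algebra_simps power2_eq_square)
qed

definition "I a b = e a * e b + F a * F b"

lemma I_step: "Suc a + i = m \<Longrightarrow> I a (Suc i) = I (Suc a) i"
proof -
  assume h: "Suc a + i = m"
  have "m - 1 - i = a" "i < m" using h by simp_all
  then have "L a = - L i" using sym[of i] by simp
  then show ?thesis unfolding I_def step_e step_F by (simp add: algebra_simps power2_eq_square)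
qed

lemma I_const: "i \<le> m \<Longrightarrow> I (m - i) i = e m"
proof (induction i)
  case 0
  then show ?case by (simp add: I_def e_def F_def)
next
  case (Suc i)
  then have "I (m - Suc i) (Suc i) = I (Suc (m - Suc i)) i" by (intro I_step) simp
  also have "Suc (m - Suc i) = m - i" using Suc by simp
  finally show ?case using Suc by simp
qed

lemma nonzero_vec: "e j ^ 2 + F j ^ 2 > 0"
proof (induction j)
  case 0
  then show ?case by (simp add: e_def F_def)
next
  case (Suc j)
  show ?case
  proof (rule ccontr)
    assume "\<not> ?case"
    then have z: "e (Suc j) = 0" "F (Suc j) = 0" by (simp_all add: sum_power2_le_zero_iff not_less)
    have "-(\<gamma>^2) * e (Suc j) - L j * \<gamma> * F (Suc j) = \<gamma>^2 * k^2 * e j"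
      unfolding step_e step_F by (simp add: algebra_simps power2_eq_square)
    then have "e j = 0" using z k g by simp
    have "L j * \<gamma> * e (Suc j) + (L j^2 - k^2) * F (Suc j) = \<gamma>^2 * k^2 * F j"
      unfolding step_e step_F by (simp add: algebra_simps power2_eq_square)
    then have "F j = 0" using z k g by simp
    then show False using Suc \<open>e j = 0\<close> by simp
  qed
qed

lemma e_m_nonzero:
  assumes mid: "\<And>n. m = 2*n+1 \<Longrightarrow> L n = 0"
  shows "e m \<noteq> 0"
proof (cases "even m")
  case True
  then obtain n where n: "m = 2*n" by blast
  have "e m = I n n" using I_const[of n] n by simp
  also have "\<dots> = e n ^ 2 + F n ^ 2" by (simp add: I_def power2_eq_square)
  finally show ?thesis using nonzero_vec[of n] by linarith
next
  case False
  then obtain n where n: "m = 2*n+1" by (metis oddE)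
  have "e m = I (Suc n) n" using I_const[of n] n by simp
  also have "\<dots> = - (k^2 * e n ^ 2 + \<gamma>^2 * F n ^ 2)"
    unfolding I_def step_e step_F mid[OF n] by (simp add: algebra_simps power2_eq_square)
  finally have em: "e m = - (k^2 * e n ^ 2 + \<gamma>^2 * F n ^ 2)" .
  have "k^2 * e n ^ 2 + \<gamma>^2 * F n ^ 2 > 0"
  proof (cases "e n = 0")
    case True
    then have "F n \<noteq> 0" using nonzero_vec[of n] by auto
    then show ?thesis using g True by simp
  next
    case False
    then show ?thesis using k by (simp add: add_pos_nonneg)
  qed
  then show ?thesis using em by simp
qed

end


lemma layer_sym: assumes "j < m" shows "layer_pot m v (m - 1 - j) = - layer_pot m v j"
proof -
  have r: "real (m - 1 - j + 1) = real m - real j" using assms by (simp add: of_nat_diff)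
  have "real (m - 1 - j + 1) - (real m + 1) / 2 = - (real (j + 1) - (real m + 1) / 2)"
    unfolding r by (simp add: field_simps)
  then show ?thesis unfolding layer_pot_def by (metis mult_minus_right)
qed

lemma layer_mid: "m = 2*n+1 \<Longrightarrow> layer_pot m v n = 0"
proof -
  assume m: "m = 2*n+1"
  have "real (n + 1) - (real m + 1) / 2 = 0" unfolding m by simp
  then show ?thesis unfolding layer_pot_def by simp
qed

lemma zero_not_root:
  assumes m: "m \<ge> 2" and k: "k > 0" and g: "\<gamma> > 0"
  shows "poly (cp (\<lambda>i. layer_pot m v (i div 2)) (\<lambda>i. if even i then k^2 else \<gamma>^2) (2*m)) 0 \<noteq> 0"
proof -
  interpret xfer_loc "layer_pot m v" k \<gamma> m
    by standard (use k g layer_sym in auto)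
  have "e m \<noteq> 0" by (rule e_m_nonzero) (rule layer_mid)
  moreover have "e m = cz (\<lambda>i. layer_pot m v (i div 2)) (\<lambda>i. if even i then k^2 else \<gamma>^2) (2*m)"
    unfolding e_def dd_def[abs_def] ww_def[abs_def] ..
  ultimately show ?thesis unfolding poly_cp_0 by simp
qed

lemma Hhat_carrier: "Hhat m \<gamma> \<kappa> v \<in> carrier_mat (2*m) (2*m)"
  unfolding Hhat_def by simp

theorem theorem2p2:
  fixes m :: nat and \<gamma> u k :: real
  assumes "m \<ge> 2" and "\<gamma> > 0" and "u > 0" and "k > 0"
  shows "\<exists>E0 > 0. \<forall>\<kappa> :: complex. cmod \<kappa> = k \<longrightarrow>
           (\<forall>H \<in> {HN m \<gamma> u \<kappa>, HS m \<gamma> u \<kappa>}.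
              (\<forall>ev. eigenvalue H ev \<longrightarrow> ev \<notin> complex_of_real ` {-E0<..<E0}) \<and>
              (\<forall>ev. eigenvalue H ev \<longrightarrow> order ev (char_poly H) = 1))"
proof -
  define W where "W = (\<lambda>i::nat. if even i then k^2 else \<gamma>^2)"
  define P where "P = (\<lambda>v. cp (\<lambda>i. layer_pot m v (i div 2)) W (2*m))"
  have Wpos: "\<And>i. W i > 0" unfolding W_def using assms by simp
  obtain q where m2: "2*m = Suc q" using assms by (metis Suc_pred mult_pos_pos not_numeral_le_zero zero_less_numeral gr0I)
  have Pnz: "P v \<noteq> 0" for v unfolding P_def m2 by (rule cp_nonzero[OF Wpos])
  have P0: "poly (P v) 0 \<noteq> 0" for v unfolding P_def W_def using zero_not_root assms by blast
  have Psimple: "poly (P v) x = 0 \<Longrightarrow> order x (P v) = 1" for v x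
    unfolding P_def m2 by (rule cp_simple[OF Wpos])
  have cpH: "char_poly (Hhat m \<gamma> \<kappa> v) = P v" if h: "cmod \<kappa> = k" for \<kappa> v
    unfolding char_poly_Hhat P_def W_def h ..
  have evH: "eigenvalue (Hhat m \<gamma> \<kappa> v) ev \<longleftrightarrow> poly (char_poly (Hhat m \<gamma> \<kappa> v)) ev = 0" for \<kappa> v ev
    by (rule eigenvalue_root_char_poly[OF Hhat_carrier])
  define R where "R = {x. poly (P u) x = 0} \<union> {x. poly (P (-u)) x = 0}"
  have finR: "finite R" unfolding R_def using poly_roots_finite[OF Pnz] by simp
  define E0 where "E0 = Min (insert 1 (cmod ` R))"
  have E0pos: "E0 > 0" unfolding E0_def
  proof (subst Min_gr_iff)
    show "finite (insert 1 (cmod ` R))" using finR by simp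
    show "insert 1 (cmod ` R) \<noteq> {}" by simp
    show "\<forall>a\<in>insert 1 (cmod ` R). 0 < a" unfolding R_def using P0 by force
  qed
  have E0le: "x \<in> R \<Longrightarrow> E0 \<le> cmod x" for x unfolding E0_def using finR by (intro Min_le) auto
  have main: "(\<forall>ev. eigenvalue (Hhat m \<gamma> \<kappa> v) ev \<longrightarrow> ev \<notin> complex_of_real ` {-E0<..<E0}) \<and>
              (\<forall>ev. eigenvalue (Hhat m \<gamma> \<kappa> v) ev \<longrightarrow> order ev (char_poly (Hhat m \<gamma> \<kappa> v)) = 1)"
    if "cmod \<kappa> = k" "v = u \<or> v = -u" for \<kappa> v
  proof (intro conjI allI impI)
    fix ev assume "eigenvalue (Hhat m \<gamma> \<kappa> v) ev"
    then have r: "poly (P v) ev = 0" using evH cpH[OF that(1)] by simp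
    then have "ev \<in> R" unfolding R_def using that(2) by auto
    then have le: "E0 \<le> cmod ev" by (rule E0le)
    show "ev \<notin> complex_of_real ` {-E0<..<E0}"
    proof
      assume "ev \<in> complex_of_real ` {-E0<..<E0}"
      then obtain t where "ev = of_real t" "-E0 < t" "t < E0" by auto
      then show False using le by auto
    qed
  next
    fix ev assume "eigenvalue (Hhat m \<gamma> \<kappa> v) ev"
    then have r: "poly (P v) ev = 0" using evH cpH[OF that(1)] by simp
    then show "order ev (char_poly (Hhat m \<gamma> \<kappa> v)) = 1" using Psimple cpH[OF that(1)] by simp
  qed
  show ?thesis
    by (rule exI[of _ E0]) (use E0pos main in \<open>auto simp: HN_def HS_def\<close>)
qed

end
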